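(* Let $X$ be a hereditarily meta-Lindelöf, compact, scattered space with countable scattered height. If $X$ has a $P$-base for some directed set $P$ with calibre $(\omega_1,\omega)$, then $X$ is countable, hence metrizable.
   Context: All spaces are Tychonoff. $X$ is hereditarily meta-Lindelöf if every open cover of any subspace has a point-countable open refinement. $X$ is scattered if every nonempty subspace has an isolated point; for $A\subseteq X$ let $A'$ be the set of non-isolated points of $A$, set $X^{(0)}=X$, $X^{(\alpha)}=\bigcap_{\beta<\alpha}(X^{(\beta)})'$ for $\alpha>0$; for $x\in X$, $h(x)$ is the ordinal with $x\in X^{(h(x))}\setminus X^{(h(x)+1)}$, and the scattered height is $h(X)=\sup\{h(x):x\in X\}$. A $P$-base is an assignment to each $x\in X$ of a neighborhood base $\{U_p:p\in P\}$ at $x$ with $U_p\subseteq U_{p'}$ whenever $p\ge p'$. A directed set has calibre $(\omega_1,\omega)$ if every uncountable subset contains an infinite subset with an upper bound. *)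

theory Defs
  imports "HOL-Analysis.Analysis"
begin

definition tychonoff_space :: "'a topology \<Rightarrow> bool" where
  "tychonoff_space X \<longleftrightarrow> completely_regular_space X \<and> Hausdorff_space X"

definition hereditarily_meta_lindelof :: "'a topology \<Rightarrow> bool" where
  "hereditarily_meta_lindelof X \<longleftrightarrow>
     (\<forall>Y \<U>. Y \<subseteq> topspace X \<and> (\<forall>U\<in>\<U>. openin (subtopology X Y) U) \<and> \<Union>\<U> = Y \<longrightarrow>
        (\<exists>\<V>. (\<forall>V\<in>\<V>. openin (subtopology X Y) V) \<and> \<Union>\<V> = Y \<and>
              (\<forall>V\<in>\<V>. \<exists>U\<in>\<U>. V \<subseteq> U) \<and>
              (\<forall>y\<in>Y. countable {V\<in>\<V>. y \<in> V})))"

definition scattered_space :: "'a topology \<Rightarrow> bool" where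
  "scattered_space X \<longleftrightarrow>
     (\<forall>A. A \<subseteq> topspace X \<and> A \<noteq> {} \<longrightarrow> (\<exists>x\<in>A. \<exists>U. openin X U \<and> U \<inter> A = {x}))"

definition nonisolated_points :: "'a topology \<Rightarrow> 'a set \<Rightarrow> 'a set" where
  "nonisolated_points X A = A \<inter> (X derived_set_of A)"

text \<open>D is the transfinite sequence of Cantor--Bendixson derivatives X^(alpha), indexed by
  the (well-ordered) field of the well-order r:
  X^(alpha) = X \<inter> (\<Inter>{beta < alpha} (X^(beta))'), so that X^(0) = X.\<close>
definition CB_derivatives :: "'a topology \<Rightarrow> 'i rel \<Rightarrow> ('i \<Rightarrow> 'a set) \<Rightarrow> bool" where
  "CB_derivatives X r D \<longleftrightarrow>
     (\<forall>\<alpha>\<in>Field r. D \<alpha> = topspace X \<inter> (\<Inter>\<beta>\<in>underS r \<alpha>. nonisolated_points X (D \<beta>)))"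

text \<open>Countable scattered height: h(X) is a countable ordinal, i.e. X^(alpha) = {} for some
  countable ordinal alpha (every countable ordinal is represented by a well-order on a
  subset of nat).\<close>
definition countable_scattered_height :: "'a topology \<Rightarrow> bool" where
  "countable_scattered_height X \<longleftrightarrow>
     (\<exists>(r :: nat rel) D. Well_order r \<and> CB_derivatives X r D \<and> (\<exists>\<alpha>\<in>Field r. D \<alpha> = {}))"

definition directed_set :: "'p set \<Rightarrow> ('p \<Rightarrow> 'p \<Rightarrow> bool) \<Rightarrow> bool" where
  "directed_set P le \<longleftrightarrow>
     (\<forall>p\<in>P. le p p) \<and>
     (\<forall>p\<in>P. \<forall>q\<in>P. \<forall>s\<in>P. le p q \<and> le q s \<longrightarrow> le p s) \<and>
     (\<forall>p\<in>P. \<forall>q\<in>P. \<exists>s\<in>P. le p s \<and> le q s)"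

definition calibre_omega1_omega :: "'p set \<Rightarrow> ('p \<Rightarrow> 'p \<Rightarrow> bool) \<Rightarrow> bool" where
  "calibre_omega1_omega P le \<longleftrightarrow>
     (\<forall>A. A \<subseteq> P \<and> uncountable A \<longrightarrow>
        (\<exists>B\<subseteq>A. infinite B \<and> (\<exists>u\<in>P. \<forall>b\<in>B. le b u)))"

definition nbhd :: "'a topology \<Rightarrow> 'a \<Rightarrow> 'a set \<Rightarrow> bool" where
  "nbhd X x N \<longleftrightarrow> (\<exists>W. openin X W \<and> x \<in> W \<and> W \<subseteq> N)"

definition P_base :: "'a topology \<Rightarrow> 'p set \<Rightarrow> ('p \<Rightarrow> 'p \<Rightarrow> bool) \<Rightarrow> ('a \<Rightarrow> 'p \<Rightarrow> 'a set) \<Rightarrow> bool" where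
  "P_base X P le U \<longleftrightarrow>
     (\<forall>x\<in>topspace X.
        (\<forall>p\<in>P. U x p \<subseteq> topspace X \<and> nbhd X x (U x p)) \<and>
        (\<forall>W. openin X W \<and> x \<in> W \<longrightarrow> (\<exists>p\<in>P. U x p \<subseteq> W)) \<and>
        (\<forall>p\<in>P. \<forall>p'\<in>P. le p' p \<longrightarrow> U x p \<subseteq> U x p'))"

end

theory Submission
  imports Defs
begin


lemma countable_compact_metrizable:
  fixes X :: "'a topology"
  assumes cr: "completely_regular_space X" and H: "Hausdorff_space X"
    and cX: "compact_space X" and co: "countable (topspace X)"
  shows "metrizable_space X"
proof -
  define I where "I = topspace X \<times> topspace X"
  have "\<forall>i\<in>I. \<exists>f. continuous_map X euclideanreal f \<and> (fst i \<noteq> snd i \<longrightarrow> f (fst i) \<noteq> f (snd i))"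
  proof
    fix i assume i: "i \<in> I"
    obtain a b where ab: "i = (a,b)" by force
    show "\<exists>f. continuous_map X euclideanreal f \<and> (fst i \<noteq> snd i \<longrightarrow> f (fst i) \<noteq> f (snd i))"
    proof (cases "a = b")
      case True then show ?thesis using ab by (intro exI[of _ "\<lambda>x. 0"]) auto
    next
      case False
      have "closedin X {b}" using H i ab I_def closedin_Hausdorff_singleton by auto
      moreover have "a \<in> topspace X - {b}" using i ab I_def False by auto
      ultimately obtain f :: "'a \<Rightarrow> real" where f: "continuous_map X (top_of_set {0..1}) f" "f a = 0" "f ` {b} \<subseteq> {1}"
        using cr unfolding completely_regular_space_def by blast
      have "continuous_map X euclideanreal f" using f(1) continuous_map_in_subtopology by blast
      then show ?thesis using f ab by (intro exI[of _ f]) auto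
    qed
  qed
  then obtain g where g: "\<And>i. i \<in> I \<Longrightarrow> continuous_map X euclideanreal (g i)"
    "\<And>i. i \<in> I \<Longrightarrow> fst i \<noteq> snd i \<Longrightarrow> g i (fst i) \<noteq> g i (snd i)" by metis
  define e where "e = (\<lambda>x. \<lambda>i\<in>I. g i x)"
  let ?Y = "product_topology (\<lambda>_. euclideanreal) I"
  have ce: "continuous_map X ?Y e"
    unfolding e_def continuous_map_componentwise using g(1) by auto
  have HY: "Hausdorff_space ?Y" by (simp add: Hausdorff_space_product_topology)
  have inj: "inj_on e (topspace X)"
  proof (rule inj_onI)
    fix a b assume a: "a \<in> topspace X" and b: "b \<in> topspace X" and eq: "e a = e b"
    show "a = b"
    proof (rule ccontr)
      assume "a \<noteq> b"
      have "(a,b) \<in> I" using a b I_def by auto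
      then have "e a (a,b) = g (a,b) a" "e b (a,b) = g (a,b) b" by (auto simp: e_def)
      with g(2)[OF \<open>(a,b) \<in> I\<close>] \<open>a \<noteq> b\<close> eq show False by auto
    qed
  qed
  have emb: "embedding_map X ?Y e"
    using continuous_imp_embedding_map[OF ce cX HY inj] .
  have "metrizable_space ?Y"
  proof (rule metrizable_topology_D)
    show "topspace ?Y \<noteq> {}" by (simp add: PiE_eq_empty_iff)
    show "countable {i \<in> I. \<nexists>a. topspace euclideanreal \<subseteq> {a}}"
      proof (rule countable_subset)
        show "countable I" unfolding I_def using co by simp
      qed auto
    show "\<And>i. i \<in> I \<Longrightarrow> metrizable_space euclideanreal" by (simp add: metrizable_space_euclidean)
  qed
  then have "metrizable_space (subtopology ?Y (e ` topspace X))"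
    by (rule metrizable_space_subtopology)
  then show ?thesis
    using embedding_map_imp_homeomorphic_space[OF emb] homeomorphic_metrizable_space by blast
qed


lemma countable_main:
  fixes X :: "'a topology" and P :: "'p set" and le :: "'p \<Rightarrow> 'p \<Rightarrow> bool"
    and U :: "'a \<Rightarrow> 'p \<Rightarrow> 'a set"
  assumes H: "Hausdorff_space X"
    and hml: "hereditarily_meta_lindelof X"
    and cX: "compact_space X"
    and sc: "scattered_space X"
    and cal: "calibre_omega1_omega P le"
    and PB: "P_base X P le U"
  shows "countable (topspace X)"
proof (rule ccontr)
  assume unc: "uncountable (topspace X)"
  have reg: "regular_space X" using cX H compact_Hausdorff_imp_regular_space by blast
  define C where "C = {z \<in> topspace X. \<forall>G. openin X G \<and> z \<in> G \<longrightarrow> uncountable G}"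
  have "C \<noteq> {}"
  proof
    assume Ce: "C = {}"
    define \<U> where "\<U> = {G. openin X G \<and> countable G}"
    have "topspace X \<subseteq> \<Union>\<U>"
    proof
      fix x assume "x \<in> topspace X"
      then have "x \<notin> C" using Ce by auto
      then obtain G where "openin X G" "x \<in> G" "countable G" using \<open>x \<in> topspace X\<close> C_def by auto
      then show "x \<in> \<Union>\<U>" using \<U>_def by auto
    qed
    moreover have "\<forall>G\<in>\<U>. openin X G" using \<U>_def by auto
    ultimately obtain F where F: "finite F" "F \<subseteq> \<U>" "topspace X \<subseteq> \<Union>F"
      using cX unfolding compact_space_def compactin_def by meson
    have "countable (\<Union>G\<in>F. G)"
      using F(1,2) \<U>_def by (intro countable_UN) (auto intro: countable_finite)
    then have "countable (\<Union>F)" by simp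
    then show False using F(3) unc countable_subset by blast
  qed
  moreover have "C \<subseteq> topspace X" using C_def by auto
  ultimately obtain z W where zC: "z \<in> C" and W: "openin X W" "W \<inter> C = {z}"
    using sc unfolding scattered_space_def by blast
  have zX: "z \<in> topspace X" using zC C_def by auto
  have zW: "z \<in> W" using W by auto
  have PBz: "(\<forall>p\<in>P. U z p \<subseteq> topspace X \<and> nbhd X z (U z p)) \<and>
        (\<forall>W. openin X W \<and> z \<in> W \<longrightarrow> (\<exists>p\<in>P. U z p \<subseteq> W)) \<and>
        (\<forall>p\<in>P. \<forall>p'\<in>P. le p' p \<longrightarrow> U z p \<subseteq> U z p')"
    using bspec[OF PB[unfolded P_base_def] zX] .
  have PB1: "\<And>p. p \<in> P \<Longrightarrow> nbhd X z (U z p)" using PBz by blast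
  have PB2: "\<And>W. openin X W \<Longrightarrow> z \<in> W \<Longrightarrow> \<exists>p\<in>P. U z p \<subseteq> W" using PBz by blast
  have PB3: "\<And>p p'. p \<in> P \<Longrightarrow> p' \<in> P \<Longrightarrow> le p' p \<Longrightarrow> U z p \<subseteq> U z p'" using PBz by blast
  have "closedin X (topspace X - W)" using W(1) by auto
  then obtain Ob where Ob: "openin X Ob" "z \<in> Ob" "disjnt (topspace X - W) (X closure_of Ob)"
    using reg zX zW unfolding regular_space by blast
  have clO: "X closure_of Ob \<subseteq> W"
    using Ob(3) closure_of_subset_topspace by (fastforce simp: disjnt_iff)
  define T where "T = Ob - {z}"
  have "uncountable Ob" using zC Ob C_def by auto
  then have uncT: "uncountable T" unfolding T_def by simp
  define Y where "Y = topspace X - {z}"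
  have Yopen: "openin X Y" unfolding Y_def
    using closedin_Hausdorff_singleton[OF H zX] by (simp add: openin_diff)
  have TY: "T \<subseteq> Y" unfolding T_def Y_def using Ob(1) openin_subset by fastforce
  have locc: "\<exists>G. openin X G \<and> y \<in> G \<and> countable (G \<inter> T)" if y: "y \<in> Y" for y
  proof (cases "y \<in> X closure_of Ob")
    case False
    have "openin X (topspace X - X closure_of Ob)" by auto
    moreover have "(topspace X - X closure_of Ob) \<inter> T = {}"
      unfolding T_def using closure_of_subset[OF openin_subset[OF Ob(1)]] by auto
    ultimately show ?thesis using False y Y_def by (intro exI[of _ "topspace X - X closure_of Ob"]) auto
  next
    case True
    then have "y \<in> W" "y \<noteq> z" "y \<in> topspace X" using clO y Y_def by auto
    then have "y \<notin> C" using W(2) by auto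
    then obtain G where "openin X G" "y \<in> G" "countable G" using \<open>y \<in> topspace X\<close> C_def by auto
    then show ?thesis by (intro exI[of _ G]) auto
  qed
  define \<U> where "\<U> = {G \<inter> Y |G. openin X G \<and> countable (G \<inter> T)}"
  have "\<forall>A\<in>\<U>. openin (subtopology X Y) A"
    unfolding \<U>_def openin_subtopology by auto
  moreover have "\<Union>\<U> = Y"
  proof
    show "\<Union>\<U> \<subseteq> Y" unfolding \<U>_def by auto
    show "Y \<subseteq> \<Union>\<U>"
    proof
      fix y assume "y \<in> Y"
      then obtain G where "openin X G" "y \<in> G" "countable (G \<inter> T)" using locc by blast
      then show "y \<in> \<Union>\<U>" unfolding \<U>_def using \<open>y \<in> Y\<close> by blast
    qed
  qed
  moreover have "Y \<subseteq> topspace X" unfolding Y_def by auto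
  ultimately have "Y \<subseteq> topspace X \<and> (\<forall>A\<in>\<U>. openin (subtopology X Y) A) \<and> \<Union>\<U> = Y" by blast
  then have "\<exists>\<V>. (\<forall>V\<in>\<V>. openin (subtopology X Y) V) \<and> \<Union>\<V> = Y \<and>
              (\<forall>V\<in>\<V>. \<exists>A\<in>\<U>. V \<subseteq> A) \<and>
              (\<forall>y\<in>Y. countable {V\<in>\<V>. y \<in> V})"
    by (rule hml[unfolded hereditarily_meta_lindelof_def, rule_format])
  then obtain \<V> where V1: "\<forall>V\<in>\<V>. openin (subtopology X Y) V" and V2: "\<Union>\<V> = Y"
    and V3: "\<forall>V\<in>\<V>. \<exists>A\<in>\<U>. V \<subseteq> A" and V4: "\<forall>y\<in>Y. countable {V\<in>\<V>. y \<in> V}"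
    by blast
  have Vopen: "openin X V" if "V \<in> \<V>" for V
    using openin_trans_full[OF V1[rule_format, OF that] Yopen] .
  have Vcount: "countable (V \<inter> T)" if Vin: "V \<in> \<V>" for V
  proof -
    obtain A where "A \<in> \<U>" "V \<subseteq> A" using V3 Vin by blast
    then obtain G where "A = G \<inter> Y" "countable (G \<inter> T)" unfolding \<U>_def by blast
    then have "V \<inter> T \<subseteq> G \<inter> T" using \<open>V \<subseteq> A\<close> by blast
    then show ?thesis using countable_subset \<open>countable (G \<inter> T)\<close> by blast
  qed
  define good where "good S \<longleftrightarrow> (\<forall>V\<in>\<V>. \<forall>a\<in>S. \<forall>b\<in>S. a \<in> V \<and> b \<in> V \<longrightarrow> a = b)" for S
  define \<A> where "\<A> = {S. S \<subseteq> T \<and> good S}"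
  have "\<forall>Ch\<in>chains \<A>. \<Union>Ch \<in> \<A>"
  proof
    fix Ch assume Ch: "Ch \<in> chains \<A>"
    then have sub: "Ch \<subseteq> \<A>" and ch: "\<forall>A\<in>Ch. \<forall>B\<in>Ch. A \<subseteq> B \<or> B \<subseteq> A"
      unfolding chains_def chain_subset_def by auto
    have "\<Union>Ch \<subseteq> T" using sub \<A>_def by auto
    moreover have "good (\<Union>Ch)"
      unfolding good_def
    proof (intro ballI impI)
      fix V a b assume "V \<in> \<V>" "a \<in> \<Union>Ch" "b \<in> \<Union>Ch" "a \<in> V \<and> b \<in> V"
      then obtain A B where AB: "A \<in> Ch" "B \<in> Ch" "a \<in> A" "b \<in> B" by auto
      then have "A \<subseteq> B \<or> B \<subseteq> A" using ch by auto
      then show "a = b"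
      proof
        assume "A \<subseteq> B"
        then show ?thesis using sub AB \<open>V \<in> \<V>\<close> \<open>a \<in> V \<and> b \<in> V\<close> unfolding \<A>_def good_def by blast
      next
        assume "B \<subseteq> A"
        then show ?thesis using sub AB \<open>V \<in> \<V>\<close> \<open>a \<in> V \<and> b \<in> V\<close> unfolding \<A>_def good_def by blast
      qed
    qed
    ultimately show "\<Union>Ch \<in> \<A>" unfolding \<A>_def by auto
  qed
  then obtain S where SA: "S \<in> \<A>" and Smax: "\<forall>S'\<in>\<A>. S \<subseteq> S' \<longrightarrow> S' = S"
    using Zorn_Lemma by blast
  have ST: "S \<subseteq> T" and Sgood: "good S" using SA \<A>_def by auto
  have uncS: "uncountable S"
  proof
    assume cS: "countable S"
    define M where "M = (\<Union>s\<in>S. \<Union>V\<in>{V\<in>\<V>. s \<in> V}. V \<inter> T)"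
    have "countable M" unfolding M_def
    proof (intro countable_UN[OF cS])
      fix s assume "s \<in> S"
      then have "countable {V\<in>\<V>. s \<in> V}" using V4 ST TY by auto
      then show "countable (\<Union>V\<in>{V\<in>\<V>. s \<in> V}. V \<inter> T)"
        using Vcount by (intro countable_UN) auto
    qed
    then obtain t where t: "t \<in> T" "t \<notin> M"
      using uncT by (metis countable_subset subsetI)
    have tS: "t \<notin> S"
    proof
      assume "t \<in> S"
      obtain V where "V \<in> \<V>" "t \<in> V" using V2 TY t(1) by blast
      then have "t \<in> M" unfolding M_def using \<open>t \<in> S\<close> t(1) by blast
      then show False using t by simp
    qed
    have "good (insert t S)"
      unfolding good_def
    proof (intro ballI impI)
      fix V a b assume V: "V \<in> \<V>" and a: "a \<in> insert t S" and b: "b \<in> insert t S" and ab: "a \<in> V \<and> b \<in> V"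
      have noS: "False" if "s \<in> S" "s \<in> V" "t \<in> V" for s
      proof -
        have "t \<in> M" unfolding M_def using that V t(1) by blast
        then show False using t by simp
      qed
      show "a = b"
      proof (cases "a = t")
        case True
        then show ?thesis using b ab noS by blast
      next
        case False
        then have "a \<in> S" using a by auto
        show ?thesis
        proof (cases "b = t")
          case True then show ?thesis using \<open>a \<in> S\<close> ab noS by blast
        next
          case False then have "b \<in> S" using b by auto
          then show ?thesis using \<open>a \<in> S\<close> ab V Sgood unfolding good_def by blast
        qed
      qed
    qed
    then have "insert t S \<in> \<A>" using ST t(1) \<A>_def by auto
    then have "insert t S = S" using Smax by blast
    then show False using tS by blast
  qed
  have SX: "S \<subseteq> topspace X" and Sz: "z \<notin> S" using ST TY Y_def by auto
  have "\<forall>s\<in>S. \<exists>p\<in>P. U z p \<subseteq> topspace X - {s}"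
  proof
    fix s assume "s \<in> S"
    then have "openin X (topspace X - {s})" "z \<in> topspace X - {s}"
      using closedin_Hausdorff_singleton[OF H] SX Sz zX by (auto simp: openin_diff)
    then show "\<exists>p\<in>P. U z p \<subseteq> topspace X - {s}" by (rule PB2)
  qed
  then have "\<forall>s\<in>S. \<exists>p. p \<in> P \<and> s \<notin> U z p" by blast
  then obtain ps where ps0: "\<forall>s\<in>S. ps s \<in> P \<and> s \<notin> U z (ps s)"
    using bchoice[of S "\<lambda>s p. p \<in> P \<and> s \<notin> U z p"] by blast
  then have ps: "\<And>s. s \<in> S \<Longrightarrow> ps s \<in> P" "\<And>s. s \<in> S \<Longrightarrow> s \<notin> U z (ps s)"
    by auto
  have "\<exists>S' u. S' \<subseteq> S \<and> infinite S' \<and> u \<in> P \<and> (\<forall>s\<in>S'. s \<notin> U z u)"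
  proof (cases "countable (ps ` S)")
    case True
    have eq: "S = (\<Union>p\<in>ps ` S. {s\<in>S. ps s = p})" by auto
    have "\<exists>p\<in>ps ` S. uncountable {s\<in>S. ps s = p}"
    proof (rule ccontr)
      assume "\<not> (\<exists>p\<in>ps ` S. uncountable {s\<in>S. ps s = p})"
      then have "\<forall>p\<in>ps ` S. countable {s\<in>S. ps s = p}" by blast
      then have cU: "countable (\<Union>p\<in>ps ` S. {s\<in>S. ps s = p})"
        using True by (intro countable_UN) auto
      have "countable S" by (subst eq) (rule cU)
      then show False using uncS by blast
    qed
    then obtain p where p: "p \<in> ps ` S" "uncountable {s\<in>S. ps s = p}" by blast
    then have "infinite {s\<in>S. ps s = p}" using countable_finite by blast
    moreover have "p \<in> P" using p(1) ps(1) by auto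
    ultimately show ?thesis using ps(2) by (intro exI[of _ "{s\<in>S. ps s = p}"] exI[of _ p]) auto
  next
    case False
    moreover have "ps ` S \<subseteq> P" using ps(1) by auto
    ultimately have "ps ` S \<subseteq> P \<and> uncountable (ps ` S)" by blast
    then have "\<exists>B\<subseteq>ps ` S. infinite B \<and> (\<exists>u\<in>P. \<forall>b\<in>B. le b u)"
      by (rule cal[unfolded calibre_omega1_omega_def, rule_format])
    then obtain B u where B: "B \<subseteq> ps ` S" "infinite B" "u \<in> P" "\<forall>b\<in>B. le b u"
      by blast
    define S' where "S' = {s\<in>S. ps s \<in> B}"
    have "ps ` S' = B" unfolding S'_def using B(1) by auto
    then have "infinite S'" using B(2) by auto
    moreover have "\<forall>s\<in>S'. s \<notin> U z u"
    proof
      fix s assume "s \<in> S'"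
      then have "s \<in> S" "le (ps s) u" using B(4) S'_def by auto
      then have "U z u \<subseteq> U z (ps s)" using PB3 ps(1) B(3) by blast
      then show "s \<notin> U z u" using ps(2)[OF \<open>s \<in> S\<close>] by blast
    qed
    ultimately show ?thesis using B(3) S'_def by (intro exI[of _ S'] exI[of _ u]) auto
  qed
  then obtain S' u where S': "S' \<subseteq> S" "infinite S'" "u \<in> P" "\<forall>s\<in>S'. s \<notin> U z u" by blast
  have "X derived_set_of S' \<noteq> {}"
    using compact_space_imp_Bolzano_Weierstrass[OF cX S'(2)] S'(1) SX by blast
  then obtain w where w: "w \<in> X derived_set_of S'" by blast
  have t1: "t1_space X" using H Hausdorff_imp_t1_space by blast
  have wX: "w \<in> topspace X" and winf: "\<And>G. w \<in> G \<Longrightarrow> openin X G \<Longrightarrow> infinite (S' \<inter> G)"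
    using w t1 unfolding t1_space_derived_set_of_infinite_openin by auto
  show False
  proof (cases "w = z")
    case True
    have "nbhd X z (U z u)" using PB1 S'(3) by blast
    then obtain G where G: "openin X G" "z \<in> G" "G \<subseteq> U z u" unfolding nbhd_def by blast
    then have "S' \<inter> G = {}" using S'(4) by auto
    then show False using winf[of G] G True by auto
  next
    case False
    then have "w \<in> Y" using wX Y_def by auto
    then obtain V where V: "V \<in> \<V>" "w \<in> V" using V2 by blast
    have "finite (S \<inter> V)"
    proof (cases "S \<inter> V = {}")
      case False
      then obtain a where a: "a \<in> S \<inter> V" by blast
      then have "S \<inter> V \<subseteq> {a}" using Sgood V(1) unfolding good_def by blast
      then show ?thesis using finite_subset by blast
    qed simp
    then have "finite (S' \<inter> V)" using S'(1) by (meson Int_mono finite_subset order_refl)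
    then show False using winf[of V] V Vopen by blast
  qed
qed


theorem mainTheorem13:
  fixes X :: "'a topology" and P :: "'p set" and le :: "'p \<Rightarrow> 'p \<Rightarrow> bool"
    and U :: "'a \<Rightarrow> 'p \<Rightarrow> 'a set"
  assumes "tychonoff_space X"
    and "hereditarily_meta_lindelof X"
    and "compact_space X"
    and "scattered_space X"
    and "countable_scattered_height X"
    and "directed_set P le"
    and "calibre_omega1_omega P le"
    and "P_base X P le U"
  shows "countable (topspace X) \<and> metrizable_space X"
proof -
  have H: "Hausdorff_space X" and cr: "completely_regular_space X"
    using assms(1) unfolding tychonoff_space_def by auto
  have c: "countable (topspace X)"
    using countable_main[OF H assms(2,3,4,7,8)] .
  then show ?thesis using countable_compact_metrizable[OF cr H assms(3) c] by simp
qed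

end
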